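(* Let $(S,* )$ be a finite cycle set and let $k\ge 1$. Let $S^{[k]}=\{s^{[k]}: s\in S\}\subseteq M$ and define $s^{[k]}\star t^{[k]}=\big(\psi_k(s)(t)\big)^{[k]}$ for $s,t\in S$. Then $(S^{[k]},\star)$ is a cycle set.
   Context: A cycle set is a set $S$ with a binary operation $*$ such that each $t\mapsto s*t$ is bijective and $(s*t)*(s*u)=(t*s)*(t*u)$ for all $s,t,u$. Write $S=\{s_1,\dots,s_n\}$, let $\psi(s)\in\mathfrak S_n$ satisfy $s_i*s_j=s_{\psi(s_i)(j)}$ (we write $\psi(s)(s_j)=s_{\psi(s)(j)}$), and $T(s)=s*s$. The structure monoid $M$ is the monoid with presentation $\langle S\mid s(s*t)=t(t*s),\ s\ne t\rangle$. For $s\in S$, $k\ge0$: $s^{[k]}=s\,T(s)\,T^2(s)\cdots T^{k-1}(s)\in M$ and $\psi_k(s)=\psi(T^{k-1}(s))\circ\cdots\circ\psi(T(s))\circ\psi(s)$. For $k\ge1$ the map $s\mapsto s^{[k]}$ is injective, so $\star$ is well defined. *)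

theory Defs
  imports Main
begin

definition cycle_set :: "'a set \<Rightarrow> ('a \<Rightarrow> 'a \<Rightarrow> 'a) \<Rightarrow> bool" where
  "cycle_set X op \<longleftrightarrow>
     (\<forall>s\<in>X. bij_betw (op s) X X) \<and>
     (\<forall>s\<in>X. \<forall>t\<in>X. \<forall>u\<in>X. op (op s t) (op s u) = op (op t s) (op t u))"

definition Tmap :: "('a \<Rightarrow> 'a \<Rightarrow> 'a) \<Rightarrow> 'a \<Rightarrow> 'a" where
  "Tmap op s = op s s"

text \<open>The congruence on words (lists) over S generated by s(s*t) = t(t*s), s \<noteq> t.
 Its classes of words in lists S are the elements of the structure monoid M.\<close>
inductive mrel :: "'a set \<Rightarrow> ('a \<Rightarrow> 'a \<Rightarrow> 'a) \<Rightarrow> 'a list \<Rightarrow> 'a list \<Rightarrow> bool"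
  for S op where
  base: "\<lbrakk>xs \<in> lists S; ys \<in> lists S; s \<in> S; t \<in> S; s \<noteq> t\<rbrakk> \<Longrightarrow>
         mrel S op (xs @ [s, op s t] @ ys) (xs @ [t, op t s] @ ys)"
| refl: "mrel S op w w"
| sym: "mrel S op u w \<Longrightarrow> mrel S op w u"
| trans: "mrel S op u v \<Longrightarrow> mrel S op v w \<Longrightarrow> mrel S op u w"

definition mclass :: "'a set \<Rightarrow> ('a \<Rightarrow> 'a \<Rightarrow> 'a) \<Rightarrow> 'a list \<Rightarrow> 'a list set" where
  "mclass S op w = {v. mrel S op w v}"

definition bracket :: "'a set \<Rightarrow> ('a \<Rightarrow> 'a \<Rightarrow> 'a) \<Rightarrow> nat \<Rightarrow> 'a \<Rightarrow> 'a list set" where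
  "bracket S op k s = mclass S op (map (\<lambda>i. (Tmap op ^^ i) s) [0..<k])"

definition bracket_set :: "'a set \<Rightarrow> ('a \<Rightarrow> 'a \<Rightarrow> 'a) \<Rightarrow> nat \<Rightarrow> 'a list set set" where
  "bracket_set S op k = bracket S op k ` S"

fun psik :: "('a \<Rightarrow> 'a \<Rightarrow> 'a) \<Rightarrow> nat \<Rightarrow> 'a \<Rightarrow> 'a \<Rightarrow> 'a" where
  "psik op 0 s = id"
| "psik op (Suc k) s = op ((Tmap op ^^ k) s) \<circ> psik op k s"

definition star :: "'a set \<Rightarrow> ('a \<Rightarrow> 'a \<Rightarrow> 'a) \<Rightarrow> nat \<Rightarrow> 'a list set \<Rightarrow> 'a list set \<Rightarrow> 'a list set" where
  "star S op k x y =
     (let s = the_inv_into S (bracket S op k) x;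
          t = the_inv_into S (bracket S op k) y
      in bracket S op k (psik op k s t))"

end

theory Submission
  imports Defs "HOL-Library.Multiset"
begin

abbreviation Wd :: "('a \<Rightarrow> 'a \<Rightarrow> 'a) \<Rightarrow> nat \<Rightarrow> 'a \<Rightarrow> 'a list" where
  "Wd op n s \<equiv> map (\<lambda>i. (Tmap op ^^ i) s) [0..<n]"

locale cyc =
  fixes S :: "'a set" and op :: "'a \<Rightarrow> 'a \<Rightarrow> 'a"
  assumes cs: "cycle_set S op"
begin

lemma bij: "s \<in> S \<Longrightarrow> bij_betw (op s) S S"
  using cs unfolding cycle_set_def by blast

lemma cyc: "s \<in> S \<Longrightarrow> t \<in> S \<Longrightarrow> u \<in> S \<Longrightarrow> op (op s t) (op s u) = op (op t s) (op t u)"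
  using cs unfolding cycle_set_def by blast

lemma opS[simp]: "s \<in> S \<Longrightarrow> t \<in> S \<Longrightarrow> op s t \<in> S"
  using bij bij_betw_apply by metis

definition g where "g x = the_inv_into S (op x)"

lemma gS[simp]: "x \<in> S \<Longrightarrow> z \<in> S \<Longrightarrow> g x z \<in> S"
  unfolding g_def using bij[of x]
  by (metis bij_betw_apply bij_betw_the_inv_into)

lemma op_g[simp]: "x \<in> S \<Longrightarrow> z \<in> S \<Longrightarrow> op x (g x z) = z"
  unfolding g_def using bij[of x]
  by (metis bij_betw_def f_the_inv_into_f)

lemma g_op[simp]: "x \<in> S \<Longrightarrow> z \<in> S \<Longrightarrow> g x (op x z) = z"
  unfolding g_def using bij[of x]
  by (metis bij_betw_def the_inv_into_f_f)

fun phi :: "'a list \<Rightarrow> 'a multiset" where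
  "phi [] = {#}"
| "phi (x # r) = add_mset x (image_mset (g x) (phi r))"

primrec Psi :: "'a list \<Rightarrow> 'a \<Rightarrow> 'a" where
  "Psi [] = id"
| "Psi (x # r) = Psi r \<circ> op x"

primrec H :: "'a list \<Rightarrow> 'a \<Rightarrow> 'a" where
  "H [] = id"
| "H (x # r) = g x \<circ> H r"

lemma phi_S: "w \<in> lists S \<Longrightarrow> set_mset (phi w) \<subseteq> S"
  by (induction w) auto

lemma size_phi[simp]: "size (phi w) = length w"
  by (induction w) auto

lemma Psi_S: "w \<in> lists S \<Longrightarrow> u \<in> S \<Longrightarrow> Psi w u \<in> S"
  by (induction w arbitrary: u) auto

lemma Psi_bij: "w \<in> lists S \<Longrightarrow> bij_betw (Psi w) S S"
proof (induction w)
  case Nil then show ?case by (simp add: bij_betw_def)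
next
  case (Cons x r)
  then have "bij_betw (Psi r \<circ> op x) S S" using bij_betw_trans[OF bij[of x]] by auto
  then show ?case by (simp add: comp_def)
qed

lemma H_Psi: "w \<in> lists S \<Longrightarrow> u \<in> S \<Longrightarrow> H w (Psi w u) = u"
  by (induction w arbitrary: u) auto

lemma Psi_append: "Psi (A @ B) = Psi B \<circ> Psi A"
  by (induction A) auto

lemma phi_append: "phi (A @ B) = phi A + image_mset (H A) (phi B)"
  by (induction A) (auto simp: multiset.map_comp comp_def)

lemma op_image_g: "x \<in> S \<Longrightarrow> set_mset M \<subseteq> S \<Longrightarrow> image_mset (op x) (image_mset (g x) M) = M"
  by (induction M) auto

lemma g_image_op: "x \<in> S \<Longrightarrow> set_mset M \<subseteq> S \<Longrightarrow> image_mset (g x) (image_mset (op x) M) = M"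
  by (induction M) auto

lemma exists_word: "set_mset M \<subseteq> S \<Longrightarrow> \<exists>w\<in>lists S. phi w = M"
proof (induction "size M" arbitrary: M)
  case 0 then show ?case by (intro bexI[of _ "[]"]) auto
next
  case (Suc n)
  then obtain x where x: "x \<in># M" by (metis size_empty nat.distinct(1) multiset_nonemptyE)
  have xS: "x \<in> S" using x Suc.prems by auto
  define M' where "M' = image_mset (op x) (M - {#x#})"
  have sub: "set_mset (M - {#x#}) \<subseteq> S" using Suc.prems by (meson in_diffD subset_iff)
  have "set_mset M' \<subseteq> S" using sub xS by (auto simp: M'_def)
  moreover have "n = size M'" using Suc.hyps(2) x by (simp add: M'_def size_Diff_singleton)
  ultimately obtain w where w: "w \<in> lists S" "phi w = M'" using Suc.hyps(1) by blast
  have "phi (x # w) = M" using w xS sub x by (simp add: M'_def g_image_op)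
  then show ?case using w xS by (intro bexI[of _ "x # w"]) auto
qed

lemma key_aux:
  "\<forall>w1 w2. length w1 = n \<longrightarrow> w1 \<in> lists S \<longrightarrow> w2 \<in> lists S \<longrightarrow> phi w1 = phi w2
     \<longrightarrow> (\<forall>u\<in>S. Psi w1 u = Psi w2 u)"
proof (induction n)
  case 0 then show ?case by (metis length_0_conv size_phi)
next
  case (Suc n)
  show ?case
  proof (intro allI impI ballI)
    fix w1 w2 u
    assume l: "length w1 = Suc n" and w1S: "w1 \<in> lists S" and w2S: "w2 \<in> lists S"
      and eq: "phi w1 = phi w2" and uS: "u \<in> S"
    have l2: "length w2 = Suc n" using l eq by (metis size_phi)
    obtain x r1 where w1: "w1 = x # r1" using l by (cases w1) auto
    obtain y r2 where w2: "w2 = y # r2" using l2 by (cases w2) auto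
    have xS: "x \<in> S" and r1S: "r1 \<in> lists S" using w1S w1 by auto
    have yS: "y \<in> S" and r2S: "r2 \<in> lists S" using w2S w2 by auto
    have lr1: "length r1 = n" using l w1 by simp
    have P1: "set_mset (phi r1) \<subseteq> S" using phi_S r1S .
    have P2: "set_mset (phi r2) \<subseteq> S" using phi_S r2S .
    have eq': "add_mset x (image_mset (g x) (phi r1)) = add_mset y (image_mset (g y) (phi r2))"
      using eq w1 w2 by simp
    show "Psi w1 u = Psi w2 u"
    proof (cases "x = y")
      case True
      then have "image_mset (g x) (phi r1) = image_mset (g x) (phi r2)" using eq' by simp
      then have "image_mset (op x) (image_mset (g x) (phi r1)) = image_mset (op x) (image_mset (g x) (phi r2))"
        by simp
      then have "phi r1 = phi r2" using op_image_g[OF xS P1] op_image_g[OF xS P2] by simp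
      then have "Psi r1 (op x u) = Psi r2 (op x u)" using Suc.IH[rule_format, OF lr1 r1S r2S] xS uS by simp
      then show ?thesis using w1 w2 True by simp
    next
      case False
      have "y \<in># add_mset x (image_mset (g x) (phi r1))" using eq' by simp
      then have yin: "y \<in># image_mset (g x) (phi r1)" using False by simp
      define R where "R = image_mset (g x) (phi r1) - {#y#}"
      have A1: "image_mset (g x) (phi r1) = add_mset y R"
        unfolding R_def using yin by simp
      have A2: "image_mset (g y) (phi r2) = add_mset x R"
      proof -
        have "add_mset y (add_mset x R) = add_mset y (image_mset (g y) (phi r2))"
          using eq' A1 by (simp add: add_mset_commute)
        then show ?thesis by simp
      qed
      have RS: "set_mset R \<subseteq> S"
      proof -
        have "set_mset (image_mset (g x) (phi r1)) \<subseteq> S" using P1 xS by auto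
        then show ?thesis using A1 by auto
      qed
      have phir1: "phi r1 = add_mset (op x y) (image_mset (op x) R)"
      proof -
        have "phi r1 = image_mset (op x) (image_mset (g x) (phi r1))" using op_image_g[OF xS P1] by simp
        also have "\<dots> = image_mset (op x) (add_mset y R)" by (simp only: A1)
        finally show ?thesis by simp
      qed
      have phir2: "phi r2 = add_mset (op y x) (image_mset (op y) R)"
      proof -
        have "phi r2 = image_mset (op y) (image_mset (g y) (phi r2))" using op_image_g[OF yS P2] by simp
        also have "\<dots> = image_mset (op y) (add_mset x R)" by (simp only: A2)
        finally show ?thesis by simp
      qed
      define N where "N = image_mset (op (op x y)) (image_mset (op x) R)"
      have N2: "N = image_mset (op (op y x)) (image_mset (op y) R)"
        unfolding N_def multiset.map_comp comp_def
      proof (intro image_mset_cong)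
        fix z assume "z \<in># R"
        then have "z \<in> S" using RS by auto
        then show "op (op x y) (op x z) = op (op y x) (op y z)" using cyc[OF xS yS] by blast
      qed
      have NS: "set_mset N \<subseteq> S" using RS xS yS by (auto simp: N_def)
      obtain r' where r'S: "r' \<in> lists S" and r': "phi r' = N" using exists_word[OF NS] by blast
      have xyS: "op x y \<in> S" "op y x \<in> S" using xS yS by auto
      have XS: "set_mset (image_mset (op x) R) \<subseteq> S" "set_mset (image_mset (op y) R) \<subseteq> S"
        using RS xS yS by auto
      have e1: "phi r1 = phi (op x y # r')"
        using r' phir1 g_image_op[OF xyS(1) XS(1)] by (simp add: N_def)
      have e2: "phi r2 = phi (op y x # r')"
        using r' phir2 g_image_op[OF xyS(2) XS(2)] by (simp add: N2)
      have lr2: "length r2 = n" using l2 w2 by simp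
      have h1: "Psi r1 (op x u) = Psi (op x y # r') (op x u)"
        using Suc.IH[rule_format, OF lr1 r1S _ e1] r'S xyS xS uS by simp
      have h2: "Psi r2 (op y u) = Psi (op y x # r') (op y u)"
        using Suc.IH[rule_format, OF lr2 r2S _ e2] r'S xyS yS uS by simp
      have "Psi w1 u = Psi r' (op (op x y) (op x u))" using h1 w1 by simp
      also have "\<dots> = Psi r' (op (op y x) (op y u))" using cyc[OF xS yS uS] by simp
      also have "\<dots> = Psi w2 u" using h2 w2 by simp
      finally show ?thesis .
    qed
  qed
qed

lemma key: "w1 \<in> lists S \<Longrightarrow> w2 \<in> lists S \<Longrightarrow> phi w1 = phi w2 \<Longrightarrow> u \<in> S \<Longrightarrow> Psi w1 u = Psi w2 u"
  using key_aux by blast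



lemma gg: "s \<in> S \<Longrightarrow> t \<in> S \<Longrightarrow> z \<in> S \<Longrightarrow> g s (g (op s t) z) = g t (g (op t s) z)"
proof -
  assume sS: "s \<in> S" and tS: "t \<in> S" and zS: "z \<in> S"
  define a where "a = g s (g (op s t) z)"
  have aS: "a \<in> S" using sS tS zS by (simp add: a_def)
  have "op (op s t) (op s a) = z" using sS tS zS by (simp add: a_def)
  then have "op (op t s) (op t a) = z" using cyc[OF sS tS aS] by simp
  then have "g t (g (op t s) z) = g t (g (op t s) (op (op t s) (op t a)))" by simp
  also have "\<dots> = a" using sS tS aS by simp
  finally show ?thesis by (simp add: a_def)
qed

lemma mrel_eq: "mrel S op A B \<Longrightarrow> phi A = phi B"
proof (induction rule: mrel.induct)
  case (base xs ys s t)
  have P: "set_mset (phi ys) \<subseteq> S" using phi_S base by blast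
  have "phi ([s, op s t] @ ys) = add_mset s (add_mset t (image_mset (g s \<circ> g (op s t)) (phi ys)))"
    using base by (simp add: multiset.map_comp)
  also have "\<dots> = add_mset t (add_mset s (image_mset (g t \<circ> g (op t s)) (phi ys)))"
  proof -
    have "image_mset (g s \<circ> g (op s t)) (phi ys) = image_mset (g t \<circ> g (op t s)) (phi ys)"
      using P base gg by (intro image_mset_cong) auto
    then show ?thesis by (simp add: add_mset_commute)
  qed
  also have "\<dots> = phi ([t, op t s] @ ys)"
    using base by (simp add: multiset.map_comp)
  finally show ?case by (simp only: phi_append)
qed auto

lemma TS: "s \<in> S \<Longrightarrow> (Tmap op ^^ i) s \<in> S"
  by (induction i) (auto simp: Tmap_def)


lemma W_S: "s \<in> S \<Longrightarrow> Wd op n s \<in> lists S"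
  using TS by auto

lemma W_Suc: "Wd op (Suc n) s = s # Wd op n (Tmap op s)"
  by (simp add: map_upt_Suc funpow_Suc_right del: upt_Suc funpow.simps)

lemma phi_W: "s \<in> S \<Longrightarrow> phi (Wd op n s) = replicate_mset n s"
proof (induction n arbitrary: s)
  case 0 then show ?case by simp
next
  case (Suc n)
  have TsS: "Tmap op s \<in> S" using Suc.prems by (simp add: Tmap_def)
  have gT: "g s (Tmap op s) = s" using Suc.prems by (simp add: Tmap_def)
  show ?case unfolding W_Suc using Suc.IH[OF TsS] Suc.prems gT by simp
qed

lemma Psi_W: "Psi (Wd op n s) = psik op n s"
  by (induction n) (simp_all add: Psi_append)

lemma psik_bij: "s \<in> S \<Longrightarrow> bij_betw (psik op n s) S S"
  using Psi_bij[OF W_S] Psi_W by metis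

lemma psik_S: "s \<in> S \<Longrightarrow> t \<in> S \<Longrightarrow> psik op n s t \<in> S"
  using psik_bij bij_betw_apply by metis

lemma phi_WW: "s \<in> S \<Longrightarrow> t \<in> S \<Longrightarrow>
   phi (Wd op n s @ Wd op n (psik op n s t)) = replicate_mset n s + replicate_mset n t"
proof -
  assume sS: "s \<in> S" and tS: "t \<in> S"
  have "H (Wd op n s) (psik op n s t) = t" using H_Psi[OF W_S[OF sS] tS] Psi_W by metis
  then show ?thesis using sS tS psik_S by (simp add: phi_append phi_W)
qed

lemma psik_cyc: "s \<in> S \<Longrightarrow> t \<in> S \<Longrightarrow> u \<in> S \<Longrightarrow>
  psik op n (psik op n s t) (psik op n s u) = psik op n (psik op n t s) (psik op n t u)"
proof -
  assume sS: "s \<in> S" and tS: "t \<in> S" and uS: "u \<in> S"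
  have "psik op n (psik op n s t) (psik op n s u) = Psi (Wd op n s @ Wd op n (psik op n s t)) u"
    by (simp add: Psi_append Psi_W)
  also have "\<dots> = Psi (Wd op n t @ Wd op n (psik op n t s)) u"
    using sS tS uS psik_S W_S phi_WW
    by (intro key) (auto simp: add.commute)
  also have "\<dots> = psik op n (psik op n t s) (psik op n t u)"
    by (simp add: Psi_append Psi_W)
  finally show ?thesis .
qed

lemma bracket_inj: "k \<ge> 1 \<Longrightarrow> inj_on (bracket S op k) S"
proof (rule inj_onI)
  fix s t assume k: "k \<ge> 1" and sS: "s \<in> S" and tS: "t \<in> S"
    and eq: "bracket S op k s = bracket S op k t"
  have "Wd op k t \<in> bracket S op k t" unfolding bracket_def mclass_def by (simp add: mrel.refl)
  then have "mrel S op (Wd op k s) (Wd op k t)" using eq unfolding bracket_def mclass_def by (metis mem_Collect_eq)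
  then have "replicate_mset k s = replicate_mset k t" using mrel_eq phi_W sS tS by metis
  then have "s \<in># replicate_mset k t" using k by (metis in_replicate_mset less_le_trans zero_less_one)
  then show "s = t" by (metis in_replicate_mset)
qed

lemma star_eq: "k \<ge> 1 \<Longrightarrow> s \<in> S \<Longrightarrow> t \<in> S \<Longrightarrow>
  star S op k (bracket S op k s) (bracket S op k t) = bracket S op k (psik op k s t)"
  unfolding star_def Let_def using the_inv_into_f_f[OF bracket_inj] by simp

lemma main: assumes k: "k \<ge> 1" shows "cycle_set (bracket_set S op k) (star S op k)"
proof -
  let ?B = "bracket S op k"
  have inj: "inj_on ?B S" using bracket_inj[OF k] .
  have bB: "bij_betw ?B S (?B ` S)" using inj by (simp add: bij_betw_def)
  have binv: "bij_betw (the_inv_into S ?B) (?B ` S) S" using bij_betw_the_inv_into[OF bB] .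
  have part1: "bij_betw (star S op k x) (?B ` S) (?B ` S)" if xin: "x \<in> ?B ` S" for x
  proof -
    obtain s where sS: "s \<in> S" and x: "x = ?B s" using xin by blast
    have bF: "bij_betw (?B \<circ> (psik op k s \<circ> the_inv_into S ?B)) (?B ` S) (?B ` S)"
      using bij_betw_trans[OF bij_betw_trans[OF binv psik_bij[OF sS, of k]] bB] .
    have eqF: "star S op k x a = (?B \<circ> (psik op k s \<circ> the_inv_into S ?B)) a" if ain: "a \<in> ?B ` S" for a
    proof -
      obtain t where tS: "t \<in> S" and a: "a = ?B t" using ain by blast
      show ?thesis using a x sS tS star_eq[OF k sS tS] the_inv_into_f_f[OF inj tS] by simp
    qed
    show ?thesis using bij_betw_cong[of "?B ` S" "star S op k x", OF eqF] bF by blast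
  qed
  have part2: "star S op k (star S op k x y) (star S op k x z) = star S op k (star S op k y x) (star S op k y z)"
    if xin: "x \<in> ?B ` S" "y \<in> ?B ` S" "z \<in> ?B ` S" for x y z
  proof -
    obtain s t u where sS: "s \<in> S" and tS: "t \<in> S" and uS: "u \<in> S"
      and xyz: "x = ?B s" "y = ?B t" "z = ?B u" using xin by blast
    show ?thesis using xyz sS tS uS psik_S star_eq[OF k] psik_cyc by simp
  qed
  show ?thesis unfolding cycle_set_def bracket_set_def using part1 part2 by blast
qed

end

theorem mainTheorem9:
  fixes S :: "'a set" and op :: "'a \<Rightarrow> 'a \<Rightarrow> 'a" and k :: nat
  assumes "cycle_set S op" and "finite S" and "k \<ge> 1"
  shows "cycle_set (bracket_set S op k) (star S op k)"
proof -
  interpret cyc S op using assms(1) by unfold_locales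
  show ?thesis using main[OF assms(3)] .
qed

end
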